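(* For every finite graph $G=(V,E)$, \[ d_{\mathrm{swap}}(G) \ge \left\lceil \frac{b^2(G) - 2}{2} \right\rceil. \]
   Context: Linear-connectivity swap network model: for $G=(V,E)$ with $|V|=n$, qubits occupy positions $0,\ldots,n-1$ on a line; a configuration is a bijection $\pi:V\to\{0,\ldots,n-1\}$; a swap layer is a set of pairwise disjoint pairs of adjacent positions $\{i,i+1\}$, and applying it exchanges the vertices at the two positions of each pair. A swap network for $G$ is an initial configuration $\pi_0$ (chosen freely) followed by swap layers $L_1,\ldots,L_d$ producing configurations $\pi_0,\ldots,\pi_d$, such that for every edge $\{v,w\}\in E$ there is some $t$ with $|\pi_t(v)-\pi_t(w)|=1$. Its swap depth is $d$, and $d_{\mathrm{swap}}(G)$ is the minimum swap depth over all swap networks for $G$. An order of $V$ is a bijection $r: V \to \{0,\ldots,|V|-1\}$; $R(V)$ is the set of all orders. For $W\subseteq V$, the order bandwidth is $b_r(W)=\max_{w\in W} r(w)-\min_{w\in W} r(w)$. Let $L_2(G)$ be the set of subgraphs of $G$ that are paths with two edges (three distinct vertices $v_1,v_2,v_3$ with $\{v_1,v_2\},\{v_2,v_3\}\in E$), and for $S\in L_2(G)$ let $V_S$ be its vertex set. The graph 2-bandwidth is $b^2(G)=\min_{r\in R(V)}\max_{S\in L_2(G)} b_r(V_S)$. *)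

theory Defs
  imports Complex_Main
begin

definition finite_graph :: "'a set \<Rightarrow> 'a set set \<Rightarrow> bool" where
  "finite_graph V E \<longleftrightarrow> finite V \<and> (\<forall>e\<in>E. e \<subseteq> V \<and> card e = 2)"

definition is_config :: "'a set \<Rightarrow> ('a \<Rightarrow> nat) \<Rightarrow> bool" where
  "is_config V \<pi> \<longleftrightarrow> bij_betw \<pi> V {0..<card V}"

definition swap_layer :: "nat \<Rightarrow> nat set set \<Rightarrow> bool" where
  "swap_layer n L \<longleftrightarrow> (\<forall>P\<in>L. \<exists>i. P = {i, i+1} \<and> i + 1 < n)
     \<and> (\<forall>P\<in>L. \<forall>Q\<in>L. P \<noteq> Q \<longrightarrow> P \<inter> Q = {})"

definition move_pos :: "nat set set \<Rightarrow> nat \<Rightarrow> nat" where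
  "move_pos L p = (if {p, p+1} \<in> L then p + 1
                   else if 0 < p \<and> {p-1, p} \<in> L then p - 1 else p)"

definition apply_layer :: "nat set set \<Rightarrow> ('a \<Rightarrow> nat) \<Rightarrow> ('a \<Rightarrow> nat)" where
  "apply_layer L \<pi> = move_pos L \<circ> \<pi>"

definition config_at :: "('a \<Rightarrow> nat) \<Rightarrow> nat set set list \<Rightarrow> nat \<Rightarrow> ('a \<Rightarrow> nat)" where
  "config_at \<pi>0 Ls t = foldl (\<lambda>\<pi> L. apply_layer L \<pi>) \<pi>0 (take t Ls)"

definition swap_network :: "'a set \<Rightarrow> 'a set set \<Rightarrow> ('a \<Rightarrow> nat) \<Rightarrow> nat set set list \<Rightarrow> bool" where
  "swap_network V E \<pi>0 Ls \<longleftrightarrow> is_config V \<pi>0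
     \<and> (\<forall>L\<in>set Ls. swap_layer (card V) L)
     \<and> (\<forall>e\<in>E. \<exists>v w. e = {v, w} \<and>
          (\<exists>t\<le>length Ls. \<bar>int (config_at \<pi>0 Ls t v) - int (config_at \<pi>0 Ls t w)\<bar> = 1))"

definition d_swap :: "'a set \<Rightarrow> 'a set set \<Rightarrow> nat" where
  "d_swap V E = (LEAST d. \<exists>\<pi>0 Ls. swap_network V E \<pi>0 Ls \<and> length Ls = d)"

definition order_bw :: "('a \<Rightarrow> nat) \<Rightarrow> 'a set \<Rightarrow> nat" where
  "order_bw r W = Max (r ` W) - Min (r ` W)"

definition L2_vsets :: "'a set \<Rightarrow> 'a set set \<Rightarrow> 'a set set" where
  "L2_vsets V E = {{v1, v2, v3} | v1 v2 v3. v1 \<noteq> v2 \<and> v2 \<noteq> v3 \<and> v1 \<noteq> v3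
      \<and> {v1, v2} \<in> E \<and> {v2, v3} \<in> E}"

text \<open>Graph 2-bandwidth (max over an empty set of paths is taken to be 0).\<close>
definition bw2 :: "'a set \<Rightarrow> 'a set set \<Rightarrow> nat" where
  "bw2 V E = Min {Max (insert 0 {order_bw r S | S. S \<in> L2_vsets V E}) | r. is_config V r}"

end

theory Submission
  imports Defs
begin

lemma config_at_0[simp]: "config_at \<pi> Ls 0 = \<pi>"
  by (simp add: config_at_def)

lemma config_at_append:
  "config_at \<pi> (Ls @ Ls') t = (if t \<le> length Ls then config_at \<pi> Ls t
     else config_at (config_at \<pi> Ls (length Ls)) Ls' (t - length Ls))"
  by (simp add: config_at_def)

lemma move_pos_close: "\<bar>int (move_pos L p) - int p\<bar> \<le> 1"
  by (simp add: move_pos_def)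

lemma config_at_Suc_close:
  "\<bar>int (config_at \<pi> Ls (Suc t) v) - int (config_at \<pi> Ls t v)\<bar> \<le> 1"
proof (cases "t < length Ls")
  case True
  then have "config_at \<pi> Ls (Suc t) = apply_layer (Ls ! t) (config_at \<pi> Ls t)"
    by (simp add: config_at_def take_Suc_conv_app_nth)
  then show ?thesis by (simp add: apply_layer_def move_pos_close)
next
  case False
  then show ?thesis by (simp add: config_at_def)
qed

lemma config_at_lip_plus:
  "\<bar>int (config_at \<pi> Ls (t + k) v) - int (config_at \<pi> Ls t v)\<bar> \<le> int k"
proof (induction k)
  case 0 then show ?case by simp
next
  case (Suc k)
  have "\<bar>int (config_at \<pi> Ls (Suc (t + k)) v) - int (config_at \<pi> Ls (t+k) v)\<bar> \<le> 1"
    by (rule config_at_Suc_close)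
  with Suc show ?case by simp
qed

lemma config_at_lip:
  "\<bar>int (config_at \<pi> Ls t v) - int (config_at \<pi> Ls s v)\<bar> \<le> \<bar>int t - int s\<bar>"
proof (cases "s \<le> t")
  case True
  then obtain k where "t = s + k" using le_Suc_ex by blast
  then show ?thesis using config_at_lip_plus[of \<pi> Ls s k v] by simp
next
  case False
  then obtain k where "s = t + k" using le_Suc_ex[of t s] by auto
  then show ?thesis using config_at_lip_plus[of \<pi> Ls t k v] by simp
qed

lemma move_pos_single:
  "move_pos {{i, i+1}} p = (if p = i then i+1 else if p = i+1 then i else p)"
  by (auto simp: move_pos_def doubleton_eq_iff)

lemma move_pos_single':
  "move_pos {{i, Suc i}} p = (if p = i then i+1 else if p = i+1 then i else p)"
  using move_pos_single by simp

lemma swap_layer_single: "i + 1 < n \<Longrightarrow> swap_layer n {{i, i+1}}"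
  by (auto simp: swap_layer_def)

lemma bij_move_single:
  assumes "i + 1 < n"
  shows "bij_betw (move_pos {{i, i+1}}) {0..<n} {0..<n}"
  apply (rule bij_betw_byWitness[where f'="move_pos {{i, i+1}}"])
  using assms by (auto simp: move_pos_single')

lemma config_single:
  assumes "is_config V \<pi>" "i + 1 < card V"
  shows "is_config V (config_at \<pi> [{{i, i+1}}] 1)"
proof -
  have "config_at \<pi> [{{i, i+1}}] 1 = move_pos {{i, i+1}} \<circ> \<pi>"
    by (simp add: config_at_def apply_layer_def)
  then show ?thesis using assms bij_betw_trans bij_move_single
    unfolding is_config_def by metis
qed

lemma config_at_append_full:
  "config_at \<pi> (Ls @ Ls') (length (Ls @ Ls')) = config_at (config_at \<pi> Ls (length Ls)) Ls' (length Ls')"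
  by (simp add: config_at_def)

lemma config_at_single_pos:
  "config_at \<pi> [{{i, i+1}}] 1 = move_pos {{i, i+1}} \<circ> \<pi>"
  by (simp add: config_at_def apply_layer_def)

lemma bubble_aux:
  "is_config V \<pi> \<Longrightarrow> v\<in>V \<Longrightarrow> w\<in>V \<Longrightarrow> v\<noteq>w \<Longrightarrow> n = nat \<bar>int (\<pi> v) - int (\<pi> w)\<bar> \<Longrightarrow>
   \<exists>Ls. (\<forall>L\<in>set Ls. swap_layer (card V) L) \<and> is_config V (config_at \<pi> Ls (length Ls))
     \<and> \<bar>int (config_at \<pi> Ls (length Ls) v) - int (config_at \<pi> Ls (length Ls) w)\<bar> = 1"
proof (induction n arbitrary: \<pi> rule: less_induct)
  case (less n \<pi>)
  have bij: "bij_betw \<pi> V {0..<card V}" using less.prems(1) by (simp add: is_config_def)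
  have ne: "\<pi> v \<noteq> \<pi> w" using bij less.prems(2-4) by (metis bij_betw_iff_bijections)
  have lt: "\<pi> v < card V" "\<pi> w < card V" using bij less.prems(2,3) bij_betwE by fastforce+
  consider "\<bar>int (\<pi> v) - int (\<pi> w)\<bar> = 1" | "\<pi> w > \<pi> v + 1" | "\<pi> v > \<pi> w + 1"
    using ne by linarith
  then show ?case
  proof cases
    case 1
    then show ?thesis using less.prems(1) by (intro exI[of _ "[]"]) simp
  next
    case 2
    define i where "i = \<pi> w - 1"
    define \<pi>' where "\<pi>' = config_at \<pi> [{{i, i+1}}] 1"
    have i1: "i + 1 < card V" using 2 lt i_def by simp
    have c': "is_config V \<pi>'" unfolding \<pi>'_def using config_single less.prems(1) i1 by blast
    have pw: "\<pi>' w = \<pi> w - 1" "\<pi>' v = \<pi> v" using 2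
      unfolding \<pi>'_def config_at_single_pos o_apply move_pos_single by (auto simp: i_def)
    obtain Ls where Ls: "\<forall>L\<in>set Ls. swap_layer (card V) L" "is_config V (config_at \<pi>' Ls (length Ls))"
      "\<bar>int (config_at \<pi>' Ls (length Ls) v) - int (config_at \<pi>' Ls (length Ls) w)\<bar> = 1"
      using less.IH[of "nat \<bar>int (\<pi>' v) - int (\<pi>' w)\<bar>" \<pi>'] c' less.prems(2-5) pw 2 by auto
    show ?thesis
      apply (rule exI[of _ "[{{i, i+1}}] @ Ls"])
      using Ls swap_layer_single[OF i1] config_at_append_full[of \<pi> "[{{i, i+1}}]" Ls]
      unfolding \<pi>'_def by auto
  next
    case 3
    define i where "i = \<pi> v - 1"
    define \<pi>' where "\<pi>' = config_at \<pi> [{{i, i+1}}] 1"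
    have i1: "i + 1 < card V" using 3 lt i_def by simp
    have c': "is_config V \<pi>'" unfolding \<pi>'_def using config_single less.prems(1) i1 by blast
    have pw: "\<pi>' v = \<pi> v - 1" "\<pi>' w = \<pi> w" using 3
      unfolding \<pi>'_def config_at_single_pos o_apply move_pos_single by (auto simp: i_def)
    obtain Ls where Ls: "\<forall>L\<in>set Ls. swap_layer (card V) L" "is_config V (config_at \<pi>' Ls (length Ls))"
      "\<bar>int (config_at \<pi>' Ls (length Ls) v) - int (config_at \<pi>' Ls (length Ls) w)\<bar> = 1"
      using less.IH[of "nat \<bar>int (\<pi>' v) - int (\<pi>' w)\<bar>" \<pi>'] c' less.prems(2-5) pw 3 by auto
    show ?thesis
      apply (rule exI[of _ "[{{i, i+1}}] @ Ls"])
      using Ls swap_layer_single[OF i1] config_at_append_full[of \<pi> "[{{i, i+1}}]" Ls]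
      unfolding \<pi>'_def by auto
  qed
qed

lemma multi_edges:
  assumes "finite F" "\<forall>e\<in>F. e \<subseteq> V \<and> card e = 2"
  shows "\<forall>\<pi>. is_config V \<pi> \<longrightarrow> (\<exists>Ls. (\<forall>L\<in>set Ls. swap_layer (card V) L)
     \<and> is_config V (config_at \<pi> Ls (length Ls))
     \<and> (\<forall>e\<in>F. \<exists>v w. e = {v, w} \<and>
          (\<exists>t\<le>length Ls. \<bar>int (config_at \<pi> Ls t v) - int (config_at \<pi> Ls t w)\<bar> = 1)))"
  using assms
proof (induction F rule: finite_induct)
  case empty
  then show ?case by (auto intro: exI[of _ "[]"])
next
  case (insert e F)
  show ?case
  proof (intro allI impI)
    fix \<pi> assume c: "is_config V \<pi>"
    obtain Ls where Ls: "\<forall>L\<in>set Ls. swap_layer (card V) L"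
      "is_config V (config_at \<pi> Ls (length Ls))"
      "\<forall>e\<in>F. \<exists>v w. e = {v, w} \<and>
          (\<exists>t\<le>length Ls. \<bar>int (config_at \<pi> Ls t v) - int (config_at \<pi> Ls t w)\<bar> = 1)"
      using insert c by auto
    obtain v w where vw: "e = {v, w}" "v \<noteq> w" "v \<in> V" "w \<in> V"
      using insert.prems by (metis card_2_iff insertCI insert_subset)
    define \<pi>' where "\<pi>' = config_at \<pi> Ls (length Ls)"
    obtain Ls' where Ls': "\<forall>L\<in>set Ls'. swap_layer (card V) L" "is_config V (config_at \<pi>' Ls' (length Ls'))"
      "\<bar>int (config_at \<pi>' Ls' (length Ls') v) - int (config_at \<pi>' Ls' (length Ls') w)\<bar> = 1"
      using bubble_aux[OF _ vw(3,4,2) refl, of \<pi>'] Ls(2) unfolding \<pi>'_def by blast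
    have full: "config_at \<pi> (Ls @ Ls') (length (Ls @ Ls')) = config_at \<pi>' Ls' (length Ls')"
      unfolding \<pi>'_def by (rule config_at_append_full)
    show "\<exists>Ls. (\<forall>L\<in>set Ls. swap_layer (card V) L)
     \<and> is_config V (config_at \<pi> Ls (length Ls))
     \<and> (\<forall>e\<in>insert e F. \<exists>v w. e = {v, w} \<and>
          (\<exists>t\<le>length Ls. \<bar>int (config_at \<pi> Ls t v) - int (config_at \<pi> Ls t w)\<bar> = 1))"
    proof (intro exI[of _ "Ls @ Ls'"] conjI ballI)
      show "\<And>L. L \<in> set (Ls @ Ls') \<Longrightarrow> swap_layer (card V) L" using Ls(1) Ls'(1) by auto
      show "is_config V (config_at \<pi> (Ls @ Ls') (length (Ls @ Ls')))" using full Ls'(2) by simp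
      fix e' assume "e' \<in> insert e F"
      then show "\<exists>v w. e' = {v, w} \<and>
          (\<exists>t\<le>length (Ls @ Ls'). \<bar>int (config_at \<pi> (Ls @ Ls') t v) - int (config_at \<pi> (Ls @ Ls') t w)\<bar> = 1)"
      proof
        assume "e' = e"
        then show ?thesis using vw(1) Ls'(3) full by (intro exI[of _ v] exI[of _ w]) auto
      next
        assume "e' \<in> F"
        then obtain a b t where "e' = {a, b}" "t \<le> length Ls"
          "\<bar>int (config_at \<pi> Ls t a) - int (config_at \<pi> Ls t b)\<bar> = 1" using Ls(3) by blast
        then show ?thesis by (intro exI[of _ a] exI[of _ b] conjI exI[of _ t]) (auto simp: config_at_append)
      qed
    qed
  qed
qed

lemma network_exists:
  assumes "finite_graph V E"
  shows "\<exists>\<pi>0 Ls. swap_network V E \<pi>0 Ls"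
proof -
  have fV: "finite V" and eE: "\<forall>e\<in>E. e \<subseteq> V \<and> card e = 2" using assms by (auto simp: finite_graph_def)
  have fE: "finite E" using fV eE by (meson Pow_iff finite_Pow_iff finite_subset subsetI)
  obtain \<pi> where c: "is_config V \<pi>" using ex_bij_betw_finite_nat[OF fV] by (auto simp: is_config_def)
  show ?thesis using multi_edges[OF fE eE] c unfolding swap_network_def by blast
qed

lemma L2_sub: "finite_graph V E \<Longrightarrow> S \<in> L2_vsets V E \<Longrightarrow> S \<subseteq> V \<and> S \<noteq> {} \<and> finite S"
  by (auto simp: L2_vsets_def finite_graph_def)

lemma L2_finite: "finite_graph V E \<Longrightarrow> finite (L2_vsets V E)"
proof -
  assume a: "finite_graph V E"
  have "L2_vsets V E \<subseteq> Pow V" using L2_sub[OF a] by auto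
  moreover have "finite V" using a by (simp add: finite_graph_def)
  ultimately show ?thesis by (meson finite_Pow_iff finite_subset)
qed

lemma order_bw_le_card:
  assumes "finite_graph V E" "is_config V r" "S \<in> L2_vsets V E"
  shows "order_bw r S \<le> card V"
proof -
  have S: "S \<subseteq> V" "S \<noteq> {}" "finite S" using L2_sub[OF assms(1,3)] by auto
  have "Max (r ` S) \<in> r ` S" using S by simp
  moreover have "r ` S \<subseteq> {0..<card V}" using assms(2) S(1) by (auto simp: is_config_def bij_betw_def)
  ultimately have "Max (r ` S) < card V" by auto
  then show ?thesis unfolding order_bw_def by simp
qed

lemma inner_le_card:
  assumes "finite_graph V E" "is_config V r"
  shows "Max (insert 0 {order_bw r S | S. S \<in> L2_vsets V E}) \<le> card V"
proof -
  have eq: "{order_bw r S | S. S \<in> L2_vsets V E} = order_bw r ` L2_vsets V E" by auto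
  show ?thesis unfolding eq using L2_finite[OF assms(1)] order_bw_le_card[OF assms] by simp
qed

lemma edge_time:
  assumes "swap_network V E \<pi>0 Ls" "{a, b} \<in> E"
  shows "\<exists>t\<le>length Ls. \<bar>int (config_at \<pi>0 Ls t a) - int (config_at \<pi>0 Ls t b)\<bar> = 1"
proof -
  obtain v w t where "{a, b} = {v, w}" "t \<le> length Ls"
    "\<bar>int (config_at \<pi>0 Ls t v) - int (config_at \<pi>0 Ls t w)\<bar> = 1"
    using assms unfolding swap_network_def by blast
  then show ?thesis by (auto simp: doubleton_eq_iff abs_minus_commute)
qed

lemma path_bw:
  assumes "swap_network V E \<pi>0 Ls" "S \<in> L2_vsets V E"
  shows "order_bw \<pi>0 S \<le> 2 * length Ls + 2"
proof -
  obtain v1 v2 v3 where S: "S = {v1, v2, v3}" "{v1, v2} \<in> E" "{v2, v3} \<in> E"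
    using assms(2) unfolding L2_vsets_def by blast
  define d where "d = length Ls"
  define P where "P t x = int (config_at \<pi>0 Ls t x)" for t x
  obtain t1 where t1: "t1 \<le> d" "\<bar>P t1 v1 - P t1 v2\<bar> = 1"
    using edge_time[OF assms(1) S(2)] unfolding P_def d_def by blast
  obtain t3 where t3: "t3 \<le> d" "\<bar>P t3 v2 - P t3 v3\<bar> = 1"
    using edge_time[OF assms(1) S(3)] unfolding P_def d_def by blast
  have l: "\<bar>P t x - P s x\<bar> \<le> \<bar>int t - int s\<bar>" for t s x
    unfolding P_def by (rule config_at_lip)
  have l1: "\<bar>P t1 v1 - P 0 v1\<bar> \<le> int t1" using l[where t=t1 and s=0 and x=v1] by simp
  have l2: "\<bar>P t1 v2 - P 0 v2\<bar> \<le> int t1" using l[where t=t1 and s=0 and x=v2] by simp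
  have l3: "\<bar>P t3 v2 - P 0 v2\<bar> \<le> int t3" using l[where t=t3 and s=0 and x=v2] by simp
  have l4: "\<bar>P t3 v3 - P 0 v3\<bar> \<le> int t3" using l[where t=t3 and s=0 and x=v3] by simp
  have l5: "\<bar>P t1 v2 - P t3 v2\<bar> \<le> \<bar>int t1 - int t3\<bar>" using l by simp
  have P0: "P 0 x = int (\<pi>0 x)" for x unfolding P_def by simp
  have a1: "\<bar>P 0 v1 - P 0 v2\<bar> \<le> 2 * int d + 2" using t1 l1 l2 by linarith
  have a2: "\<bar>P 0 v2 - P 0 v3\<bar> \<le> 2 * int d + 2" using t3 l3 l4 by linarith
  have a3: "\<bar>P 0 v1 - P 0 v3\<bar> \<le> 2 * int d + 2" using t1 t3 l1 l5 l4 by linarith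
  have bnd: "int (\<pi>0 x) - int (\<pi>0 y) \<le> 2 * int d + 2" if "x \<in> S" "y \<in> S" for x y
  proof -
    have "x = v1 \<or> x = v2 \<or> x = v3" "y = v1 \<or> y = v2 \<or> y = v3" using that S(1) by auto
    then have "\<bar>P 0 x - P 0 y\<bar> \<le> 2 * int d + 2" using a1 a2 a3
      by (elim disjE) (simp_all add: abs_minus_commute)
    then show ?thesis unfolding P0 by linarith
  qed
  have fS: "finite S" "S \<noteq> {}" using S by auto
  have "Max (\<pi>0 ` S) \<in> \<pi>0 ` S" "Min (\<pi>0 ` S) \<in> \<pi>0 ` S" using fS by simp_all
  then obtain x y where x: "x \<in> S" "Max (\<pi>0 ` S) = \<pi>0 x" and y: "y \<in> S" "Min (\<pi>0 ` S) = \<pi>0 y"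
    by blast
  show ?thesis unfolding order_bw_def x y d_def[symmetric] using bnd[OF x(1) y(1)] by simp
qed

theorem lemma2:
  fixes V :: "'a set" and E :: "'a set set"
  assumes "finite_graph V E"
  shows "int (d_swap V E) \<ge> \<lceil>(real (bw2 V E) - 2) / 2\<rceil>"
proof -
  obtain \<pi>0 Ls where net: "swap_network V E \<pi>0 Ls" "length Ls = d_swap V E"
    using LeastI_ex[of "\<lambda>d. \<exists>\<pi>0 Ls. swap_network V E \<pi>0 Ls \<and> length Ls = d"]
      network_exists[OF assms] unfolding d_swap_def by blast
  have c: "is_config V \<pi>0" using net(1) by (simp add: swap_network_def)
  let ?A = "{Max (insert 0 {order_bw r S | S. S \<in> L2_vsets V E}) | r. is_config V r}"
  have fin: "finite ?A"
    by (rule finite_subset[of _ "{..card V}"]) (auto dest: inner_le_card[OF assms])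
  have "bw2 V E \<le> Max (insert 0 {order_bw \<pi>0 S | S. S \<in> L2_vsets V E})"
    unfolding bw2_def using c by (intro Min_le[OF fin]) auto
  also have "\<dots> \<le> 2 * d_swap V E + 2"
  proof -
    have eq: "{order_bw \<pi>0 S | S. S \<in> L2_vsets V E} = order_bw \<pi>0 ` L2_vsets V E" by auto
    show ?thesis unfolding eq using L2_finite[OF assms] path_bw[OF net(1)] net(2) by simp
  qed
  finally have b: "bw2 V E \<le> 2 * d_swap V E + 2" .
  then have "(real (bw2 V E) - 2) / 2 \<le> real_of_int (int (d_swap V E))" by simp
  then show ?thesis by (simp add: ceiling_le_iff)
qed

end
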